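(* Let $\mathcal A=(A,\le,\mathrm{app},\to,\mathsf k,\mathsf s,\Phi)$ be a full adjunction implicative ordered combinatory algebra, and let $\mathcal K=\mathcal K_{\mathcal A\bullet}$ be the abstract Krivine structure with $\Lambda=\Pi=A$, $s\perp\pi\iff s\le\pi$, $\mathrm{app}(s,t)=st$, $\mathrm{push}(s,\pi)=s\to\pi$, $\mathsf K=\mathsf k$, $\mathsf S=\mathsf s$, $\mathrm{QP}=\Phi$. Consider the preorder $(A,\sqsubseteq)$, where $a\sqsubseteq a'$ iff there is $r\in\Phi$ with $ra\le a'$, and the preorder $(\mathcal P_\bullet(A),\sqsubseteq_\bullet)$ computed in $\mathcal K$, where $C\sqsubseteq_\bullet C'$ iff there is $t\in\Phi$ with $t\le x$ for every $x\in C\to_\bullet C'$. Then these preorders are equivalent; more precisely, $\rho:\mathcal P_\bullet(A)\to A$, $\rho(C)=\inf C$, is an equivalence of preorders. Consequently the Heyting preorder $\mathcal H_{\mathcal A}$ associated to $\mathcal A$ is equivalent to the Heyting preorder $\mathcal H_{\mathcal A_{\mathcal K\bullet}}$ associated to the full adjunction implicative ordered combinatory algebra $\mathcal A_{\mathcal K\bullet}$ built from $\mathcal K$.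
   Context: A full adjunction implicative ordered combinatory algebra is an inf-complete poset $(A,\le)$ with application $ab$ monotone in both arguments, implication $a\to b$ antimonotone in the first and monotone in the second argument, elements $\mathsf k,\mathsf s$ with $\mathsf k ab\le a$, $\mathsf s abc\le ac(bc)$, such that $a\le b\to c\iff ab\le c$, and a subset $\Phi\subseteq A$ closed under application containing $\mathsf s,\mathsf k$. Its Heyting preorder $\mathcal H_{\mathcal A}$ has underlying preorder $(A,\sqsubseteq)$ as in the claim. In $\mathcal K$: polars ${}^\perp P=\{t:\forall\pi\in P,\ t\le\pi\}$, $L^\perp=\{\pi:\forall t\in L,\ t\le\pi\}$; $\overline P=({}^\perp P)^\perp$; $\widehat P=\bigcup_{\pi\in P}\overline{\{\pi\}}$; $\mathcal P_\bullet(A)=\{P\subseteq A:\widehat P=P\}$; $C\to_\bullet C'=\widehat{\{s\to\pi:s\in{}^\perp C,\pi\in C'\}}$. $\mathcal A_{\mathcal K\bullet}$ has carrier $\mathcal P_\bullet(A)$ ordered by $\supseteq$, application $P\circ_\bullet Q=\{\pi:s\to\pi'\in P\ \forall s\in{}^\perp Q,\ \pi'\in\overline{\{\pi\}}\}$, implication $\to_\bullet$, and filter $\{P\in\mathcal P_\bullet(A):\exists t\in\Phi,\ t\le P\}$; its Heyting preorder has order $Q\sqsubseteq R$ iff some $F$ in this filter has $F\circ_\bullet Q\supseteq R$, and this order coincides with $\sqsubseteq_\bullet$. A monotone map of preorders is an equivalence if it has a monotone weak inverse (compositions pointwise isomorphic to identities). *)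

theory Defs
  imports Main
begin

text \<open>The carrier is a type
  whose order is inf-complete; every inf-complete poset is a complete lattice, so we use the
  class complete_lattice. app is application, imp is implication.\<close>

definition full_adj_ioca ::
  "('a::complete_lattice \<Rightarrow> 'a \<Rightarrow> 'a) \<Rightarrow> ('a \<Rightarrow> 'a \<Rightarrow> 'a) \<Rightarrow> 'a \<Rightarrow> 'a \<Rightarrow> 'a set \<Rightarrow> bool" where
  "full_adj_ioca app imp k s Phi \<longleftrightarrow>
     (\<forall>a a' b b'. a \<le> a' \<longrightarrow> b \<le> b' \<longrightarrow> app a b \<le> app a' b') \<and>
     (\<forall>a a' b b'. a' \<le> a \<longrightarrow> b \<le> b' \<longrightarrow> imp a b \<le> imp a' b') \<and>
     (\<forall>a b. app (app k a) b \<le> a) \<and>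
     (\<forall>a b c. app (app (app s a) b) c \<le> app (app a c) (app b c)) \<and>
     (\<forall>a b c. a \<le> imp b c \<longleftrightarrow> app a b \<le> c) \<and>
     (\<forall>a\<in>Phi. \<forall>b\<in>Phi. app a b \<in> Phi) \<and> k \<in> Phi \<and> s \<in> Phi"

definition ioca_ord :: "('a::complete_lattice \<Rightarrow> 'a \<Rightarrow> 'a) \<Rightarrow> 'a set \<Rightarrow> 'a \<Rightarrow> 'a \<Rightarrow> bool" where
  "ioca_ord app Phi a a' \<longleftrightarrow> (\<exists>r\<in>Phi. app r a \<le> a')"

text \<open>Krivine structure K with Lambda = Pi = A, s \<perp> pi iff s \<le> pi.\<close>
definition lpolar :: "'a::complete_lattice set \<Rightarrow> 'a set" where
  "lpolar P = {t. \<forall>\<pi>\<in>P. t \<le> \<pi>}"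

definition rpolar :: "'a::complete_lattice set \<Rightarrow> 'a set" where
  "rpolar L = {\<pi>. \<forall>t\<in>L. t \<le> \<pi>}"

definition bclos :: "'a::complete_lattice set \<Rightarrow> 'a set" where
  "bclos P = rpolar (lpolar P)"

definition hatclos :: "'a::complete_lattice set \<Rightarrow> 'a set" where
  "hatclos P = (\<Union>\<pi>\<in>P. bclos {\<pi>})"

definition Pbullet :: "'a::complete_lattice set set" where
  "Pbullet = {P. hatclos P = P}"

definition imp_bullet :: "('a::complete_lattice \<Rightarrow> 'a \<Rightarrow> 'a) \<Rightarrow> 'a set \<Rightarrow> 'a set \<Rightarrow> 'a set" where
  "imp_bullet imp C C' = hatclos {imp s \<pi> | s \<pi>. s \<in> lpolar C \<and> \<pi> \<in> C'}"

definition bullet_ord :: "('a::complete_lattice \<Rightarrow> 'a \<Rightarrow> 'a) \<Rightarrow> 'a set \<Rightarrow> 'a set \<Rightarrow> 'a set \<Rightarrow> bool" where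
  "bullet_ord imp Phi C C' \<longleftrightarrow> (\<exists>t\<in>Phi. \<forall>x\<in>imp_bullet imp C C'. t \<le> x)"

definition app_bullet :: "('a::complete_lattice \<Rightarrow> 'a \<Rightarrow> 'a) \<Rightarrow> 'a set \<Rightarrow> 'a set \<Rightarrow> 'a set" where
  "app_bullet imp P Q = {\<pi>. \<forall>s\<in>lpolar Q. \<forall>\<pi>'\<in>bclos {\<pi>}. imp s \<pi>' \<in> P}"

definition filter_bullet :: "'a::complete_lattice set \<Rightarrow> 'a set set" where
  "filter_bullet Phi = {P \<in> Pbullet. \<exists>t\<in>Phi. \<forall>x\<in>P. t \<le> x}"

definition heyting_bullet_ord :: "('a::complete_lattice \<Rightarrow> 'a \<Rightarrow> 'a) \<Rightarrow> 'a set \<Rightarrow> 'a set \<Rightarrow> 'a set \<Rightarrow> bool" where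
  "heyting_bullet_ord imp Phi Q R \<longleftrightarrow> (\<exists>F\<in>filter_bullet Phi. app_bullet imp F Q \<supseteq> R)"

definition preorder_equivalence ::
  "'x set \<Rightarrow> ('x \<Rightarrow> 'x \<Rightarrow> bool) \<Rightarrow> 'y set \<Rightarrow> ('y \<Rightarrow> 'y \<Rightarrow> bool) \<Rightarrow> ('x \<Rightarrow> 'y) \<Rightarrow> bool" where
  "preorder_equivalence X rX Y rY f \<longleftrightarrow>
     (\<forall>x\<in>X. f x \<in> Y) \<and> (\<forall>x\<in>X. \<forall>x'\<in>X. rX x x' \<longrightarrow> rY (f x) (f x')) \<and>
     (\<exists>g. (\<forall>y\<in>Y. g y \<in> X) \<and> (\<forall>y\<in>Y. \<forall>y'\<in>Y. rY y y' \<longrightarrow> rX (g y) (g y')) \<and>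
          (\<forall>x\<in>X. rX (g (f x)) x \<and> rX x (g (f x))) \<and>
          (\<forall>y\<in>Y. rY (f (g y)) y \<and> rY y (f (g y))))"

end

theory Submission
  imports Defs
begin

lemma bclos_single: "bclos {p} = {x::'a::complete_lattice. p \<le> x}"
  unfolding bclos_def lpolar_def rpolar_def by (auto intro: order_trans)

lemma lpolar_eq: "lpolar C = {t::'a::complete_lattice. t \<le> Inf C}"
  unfolding lpolar_def by (auto intro: Inf_greatest Inf_lower order_trans)

lemma up_Pbullet: "{x::'a::complete_lattice. a \<le> x} \<in> Pbullet"
  unfolding Pbullet_def hatclos_def bclos_single by (auto intro: order_trans)

lemma Inf_up: "Inf {x::'a::complete_lattice. a \<le> x} = a"
  by (auto intro: antisym Inf_lower Inf_greatest)

lemma refl_ord: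
  assumes A: "full_adj_ioca app imp k s Phi"
  shows "ioca_ord app Phi a a"
proof -
  have Ph: "app (app s k) k \<in> Phi" using A unfolding full_adj_ioca_def by blast
  have "app (app (app s k) k) a \<le> app (app k a) (app k a)" using A unfolding full_adj_ioca_def by blast
  also have "\<dots> \<le> a" using A unfolding full_adj_ioca_def by blast
  finally show ?thesis using Ph unfolding ioca_ord_def by blast
qed

lemma equiv_gen:
  assumes A: "full_adj_ioca app imp k s Phi"
    and R: "\<And>C C'. rX C C' \<longleftrightarrow> ioca_ord app Phi (Inf C) (Inf C')"
  shows "preorder_equivalence Pbullet rX UNIV (ioca_ord app Phi) Inf"
  unfolding preorder_equivalence_def
proof (intro conjI)
  show "\<forall>x\<in>Pbullet. \<forall>x'\<in>Pbullet. rX x x' \<longrightarrow> ioca_ord app Phi (Inf x) (Inf x')" using R by blast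
  let ?g = "\<lambda>a. {x::'a. a \<le> x}"
  show "\<exists>g. (\<forall>y\<in>UNIV. g y \<in> Pbullet) \<and>
        (\<forall>y\<in>UNIV. \<forall>y'\<in>UNIV. ioca_ord app Phi y y' \<longrightarrow> rX (g y) (g y')) \<and>
        (\<forall>x\<in>Pbullet. rX (g (Inf x)) x \<and> rX x (g (Inf x))) \<and>
        (\<forall>y\<in>UNIV. ioca_ord app Phi (Inf (g y)) y \<and> ioca_ord app Phi y (Inf (g y)))"
    apply (rule exI[of _ ?g])
    by (simp add: Inf_up up_Pbullet R refl_ord[OF A])
qed simp

lemma ord1:
  assumes A: "full_adj_ioca app imp k s Phi"
  shows "bullet_ord imp Phi C C' \<longleftrightarrow> ioca_ord app Phi (Inf C) (Inf C')"
proof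
  have adj: "\<And>a b c. a \<le> imp b c \<longleftrightarrow> app a b \<le> c" using A unfolding full_adj_ioca_def by blast
  have im: "\<And>a a' b b'. a' \<le> a \<Longrightarrow> b \<le> b' \<Longrightarrow> imp a b \<le> imp a' b'" using A unfolding full_adj_ioca_def by blast
  {
    assume "bullet_ord imp Phi C C'"
    then obtain t where t: "t \<in> Phi" "\<forall>x\<in>imp_bullet imp C C'. t \<le> x" unfolding bullet_ord_def by blast
    have "\<And>p. p \<in> C' \<Longrightarrow> imp (Inf C) p \<in> imp_bullet imp C C'"
      unfolding imp_bullet_def hatclos_def bclos_single lpolar_eq by blast
    hence "\<And>p. p \<in> C' \<Longrightarrow> app t (Inf C) \<le> p" using t adj by blast
    hence "app t (Inf C) \<le> Inf C'" by (rule Inf_greatest)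
    thus "ioca_ord app Phi (Inf C) (Inf C')" using t unfolding ioca_ord_def by blast
  }
  {
    assume "ioca_ord app Phi (Inf C) (Inf C')"
    then obtain t where t: "t \<in> Phi" "app t (Inf C) \<le> Inf C'" unfolding ioca_ord_def by blast
    have "\<forall>x\<in>imp_bullet imp C C'. t \<le> x"
    proof
      fix x assume "x \<in> imp_bullet imp C C'"
      then obtain s0 p where sp: "s0 \<le> Inf C" "p \<in> C'" "imp s0 p \<le> x"
        unfolding imp_bullet_def hatclos_def bclos_single lpolar_eq by blast
      have "app t (Inf C) \<le> p" using t(2) sp(2) by (meson Inf_lower order_trans)
      hence "t \<le> imp (Inf C) p" using adj by blast
      also have "\<dots> \<le> imp s0 p" using im sp(1) by blast
      finally show "t \<le> x" using sp(3) by simp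
    qed
    thus "bullet_ord imp Phi C C'" using t unfolding bullet_ord_def by blast
  }
qed

lemma ord2:
  assumes A: "full_adj_ioca app imp k s Phi"
  shows "heyting_bullet_ord imp Phi Q R \<longleftrightarrow> ioca_ord app Phi (Inf Q) (Inf R)"
proof
  have adj: "\<And>a b c. a \<le> imp b c \<longleftrightarrow> app a b \<le> c" using A unfolding full_adj_ioca_def by blast
  have ap: "\<And>a a' b b'. a \<le> a' \<Longrightarrow> b \<le> b' \<Longrightarrow> app a b \<le> app a' b'" using A unfolding full_adj_ioca_def by blast
  {
    assume "heyting_bullet_ord imp Phi Q R"
    then obtain F t where F: "R \<subseteq> app_bullet imp F Q" "t \<in> Phi" "\<forall>x\<in>F. t \<le> x"
      unfolding heyting_bullet_ord_def filter_bullet_def by blast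
    have "\<And>p. p \<in> R \<Longrightarrow> app t (Inf Q) \<le> p"
    proof -
      fix p assume "p \<in> R"
      hence "imp (Inf Q) p \<in> F" using F(1) unfolding app_bullet_def bclos_single lpolar_eq by blast
      thus "app t (Inf Q) \<le> p" using F(3) adj by blast
    qed
    hence "app t (Inf Q) \<le> Inf R" by (rule Inf_greatest)
    thus "ioca_ord app Phi (Inf Q) (Inf R)" using F unfolding ioca_ord_def by blast
  }
  {
    assume "ioca_ord app Phi (Inf Q) (Inf R)"
    then obtain t where t: "t \<in> Phi" "app t (Inf Q) \<le> Inf R" unfolding ioca_ord_def by blast
    let ?F = "{x. t \<le> x}"
    have "?F \<in> filter_bullet Phi" unfolding filter_bullet_def using up_Pbullet t(1) by blast
    moreover have "R \<subseteq> app_bullet imp ?F Q"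
    proof
      fix p assume p: "p \<in> R"
      have "\<And>s0 p'. s0 \<le> Inf Q \<Longrightarrow> p \<le> p' \<Longrightarrow> t \<le> imp s0 p'"
      proof -
        fix s0 p' assume h: "s0 \<le> Inf Q" "p \<le> p'"
        have "app t s0 \<le> app t (Inf Q)" using ap h(1) by blast
        also have "\<dots> \<le> Inf R" by (rule t(2))
        also have "\<dots> \<le> p" using p by (rule Inf_lower)
        also have "\<dots> \<le> p'" by (rule h(2))
        finally show "t \<le> imp s0 p'" using adj by blast
      qed
      thus "p \<in> app_bullet imp ?F Q" unfolding app_bullet_def bclos_single lpolar_eq by blast
    qed
    ultimately show "heyting_bullet_ord imp Phi Q R" unfolding heyting_bullet_ord_def by blast
  }
qed

theorem mainTheorem14:
  fixes app imp :: "'a::complete_lattice \<Rightarrow> 'a \<Rightarrow> 'a" and k s :: 'a and Phi :: "'a set"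
  assumes "full_adj_ioca app imp k s Phi"
  shows "preorder_equivalence Pbullet (bullet_ord imp Phi) UNIV (ioca_ord app Phi) Inf
       \<and> preorder_equivalence Pbullet (heyting_bullet_ord imp Phi) UNIV (ioca_ord app Phi) Inf"
  using equiv_gen[OF assms ord1[OF assms]] equiv_gen[OF assms ord2[OF assms]] by blast

end
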